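(* In the $\ell^1$ linear social choice setting with $n$ voters, $m$ candidates and dimension $d$, the worst-case distortion of the plurality rule is $\mathrm{D}(f_{\mathrm{Plur}})=\Theta(\min(m,n)\cdot d)$.
   Context: Setting ($\ell^1$ linear social choice). Let $\Delta_d=\{x\in\mathbb{R}^d_{\ge 0}:\sum_i x^i=1\}$. An instance consists of $n$ voters and $m$ candidates, each a vector in $\Delta_d$, with every voter vector in $\mathrm{Cone}(C)$ (nonnegative linear combinations of the candidate vectors $C$). Utility: $u_v(c)=v^\top c$. Each voter reports a ranking of $C$ consistent with its utilities (ties broken arbitrarily). $\mathrm{UW}(c)=\sum_v u_v(c)$. The distortion of a rule $f$ on an instance is $\max_c\mathrm{UW}(c)/\mathrm{UW}(f)$ where $f$ is the candidate output; $\mathrm{D}(f)$ is the supremum over all instances with the given $n,m,d$, as a function of $n,m,d$. Plurality $f_{\mathrm{Plur}}$: output a candidate ranked first by the largest number of voters (ties broken arbitrarily). *)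

theory Defs
  imports "HOL-Library.Extended_Real"
begin

text \<open>Vectors in R^d are represented as functions nat => real; only the
coordinates k < d matter (the simplex condition forces the others to be 0).
Voters are indexed by i < n, candidates by j < m.\<close>

definition in_simplex :: "nat \<Rightarrow> (nat \<Rightarrow> real) \<Rightarrow> bool" where
  "in_simplex d x \<longleftrightarrow> (\<forall>k. d \<le> k \<longrightarrow> x k = 0) \<and> (\<forall>k<d. 0 \<le> x k) \<and> (\<Sum>k<d. x k) = 1"

definition in_cone :: "nat \<Rightarrow> nat \<Rightarrow> (nat \<Rightarrow> nat \<Rightarrow> real) \<Rightarrow> (nat \<Rightarrow> real) \<Rightarrow> bool" where
  "in_cone d m C v \<longleftrightarrow> (\<exists>lam :: nat \<Rightarrow> real. (\<forall>j<m. 0 \<le> lam j) \<and>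
       (\<forall>k<d. v k = (\<Sum>j<m. lam j * C j k)))"

definition util :: "nat \<Rightarrow> (nat \<Rightarrow> real) \<Rightarrow> (nat \<Rightarrow> real) \<Rightarrow> real" where
  "util d v c = (\<Sum>k<d. v k * c k)"

definition UW :: "nat \<Rightarrow> nat \<Rightarrow> (nat \<Rightarrow> nat \<Rightarrow> real) \<Rightarrow> (nat \<Rightarrow> real) \<Rightarrow> real" where
  "UW n d V c = (\<Sum>i<n. util d (V i) c)"

definition valid_instance ::
  "nat \<Rightarrow> nat \<Rightarrow> nat \<Rightarrow> (nat \<Rightarrow> nat \<Rightarrow> real) \<Rightarrow> (nat \<Rightarrow> nat \<Rightarrow> real) \<Rightarrow> bool" where
  "valid_instance n m d V C \<longleftrightarrow>
     (\<forall>i<n. in_simplex d (V i)) \<and> (\<forall>j<m. in_simplex d (C j)) \<and> (\<forall>i<n. in_cone d m C (V i))"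

definition consistent_ranking ::
  "nat \<Rightarrow> nat \<Rightarrow> (nat \<Rightarrow> nat \<Rightarrow> real) \<Rightarrow> (nat \<Rightarrow> real) \<Rightarrow> nat list \<Rightarrow> bool" where
  "consistent_ranking m d C v r \<longleftrightarrow> distinct r \<and> set r = {..<m} \<and>
     sorted_wrt (\<lambda>a b. util d v (C b) \<le> util d v (C a)) r"

definition plurality_winner :: "nat \<Rightarrow> nat \<Rightarrow> (nat \<Rightarrow> nat list) \<Rightarrow> nat \<Rightarrow> bool" where
  "plurality_winner n m R w \<longleftrightarrow> w < m \<and>
     (\<forall>j<m. card {i. i < n \<and> hd (R i) = j} \<le> card {i. i < n \<and> hd (R i) = w})"

definition distortion_of :: "nat \<Rightarrow> nat \<Rightarrow> nat \<Rightarrow> (nat \<Rightarrow> nat \<Rightarrow> real) \<Rightarrow> (nat \<Rightarrow> nat \<Rightarrow> real) \<Rightarrow> nat \<Rightarrow> real" where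
  "distortion_of n m d V C w = (MAX j\<in>{..<m}. UW n d V (C j)) / UW n d V (C w)"

definition D_plur :: "nat \<Rightarrow> nat \<Rightarrow> nat \<Rightarrow> ereal" where
  "D_plur n m d = (SUP x \<in> {(V, C, R, w). valid_instance n m d V C \<and>
        (\<forall>i<n. consistent_ranking m d C (V i) (R i)) \<and> plurality_winner n m R w}.
     ereal (case x of (V, C, R, w) \<Rightarrow> distortion_of n m d V C w))"

end

theory Submission
  imports Defs
begin


lemma exists_ranking:
  fixes f :: "nat \<Rightarrow> real"
  assumes "j < m" "\<And>x. x < m \<Longrightarrow> f x \<le> f j"
  shows "\<exists>r. distinct r \<and> set r = {..<m} \<and> sorted_wrt (\<lambda>a b. f b \<le> f a) r \<and> hd r = j"
proof -
  define rest where "rest = sort_key (\<lambda>x. - f x) (removeAll j [0..<m])"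
  have s: "sorted_wrt (\<lambda>a b. f b \<le> f a) rest"
    using sorted_sort_key[of "\<lambda>x. - f x" "removeAll j [0..<m]"]
    unfolding rest_def sorted_map by simp
  have st: "set rest = {..<m} - {j}" unfolding rest_def by auto
  show ?thesis
    apply (rule exI[of _ "j # rest"])
    using s st assms by (auto simp: rest_def distinct_removeAll)
qed

lemma cs:
  fixes v :: "nat \<Rightarrow> real"
  assumes "d > 0"
  shows "(\<Sum>k<d. v k)^2 / d \<le> (\<Sum>k<d. v k * v k)"
proof -
  let ?s = "(\<Sum>k<d. v k)"
  have "0 \<le> (\<Sum>k<d. (v k - ?s/d)^2)" by (simp add: sum_nonneg)
  also have "\<dots> = (\<Sum>k<d. v k * v k - 2 * (?s/d) * v k + (?s/d)^2)"
    by (rule sum.cong) (auto simp: power2_eq_square algebra_simps)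
  also have "\<dots> = (\<Sum>k<d. v k * v k) - 2 * (?s/d) * ?s + d * (?s/d)^2"
    by (simp add: sum.distrib sum_subtractf sum_distrib_left)
  also have "\<dots> = (\<Sum>k<d. v k * v k) - ?s^2/d"
    using assms by (simp add: power2_eq_square field_simps)
  finally show ?thesis by simp
qed

lemma util_top:
  assumes d: "d > 0" and v: "in_simplex d v" and C: "\<And>j. j < m \<Longrightarrow> in_simplex d (C j)"
    and cone: "in_cone d m C v" and t: "t < m"
    and top: "\<And>j. j < m \<Longrightarrow> util d v (C j) \<le> util d v (C t)"
  shows "1 / real d \<le> util d v (C t)"
proof -
  obtain lam where lam0: "\<And>j. j < m \<Longrightarrow> 0 \<le> lam j"
    and lamv: "\<And>k. k < d \<Longrightarrow> v k = (\<Sum>j<m. lam j * C j k)"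
    using cone unfolding in_cone_def by blast
  have vs: "(\<Sum>k<d. v k) = 1" using v unfolding in_simplex_def by blast
  have "util d v v = (\<Sum>k<d. v k * (\<Sum>j<m. lam j * C j k))"
    unfolding util_def by (rule sum.cong) (auto simp: lamv[symmetric])
  also have "\<dots> = (\<Sum>j<m. lam j * util d v (C j))"
    unfolding util_def by (simp add: sum_distrib_left sum.swap[of _ "{..<m}"] algebra_simps)
  also have "\<dots> \<le> (\<Sum>j<m. lam j * util d v (C t))"
    by (rule sum_mono) (simp add: lam0 top mult_left_mono)
  also have "\<dots> = (\<Sum>j<m. lam j) * util d v (C t)"
    by (simp add: sum_distrib_right)
  also have "(\<Sum>j<m. lam j) = 1"
  proof -
    have "(\<Sum>j<m. lam j) = (\<Sum>j<m. lam j * (\<Sum>k<d. C j k))"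
      using C unfolding in_simplex_def by simp
    also have "\<dots> = (\<Sum>k<d. (\<Sum>j<m. lam j * C j k))"
      by (simp add: sum_distrib_left sum.swap[of _ "{..<m}"])
    also have "\<dots> = (\<Sum>k<d. v k)" by (rule sum.cong) (auto simp: lamv)
    finally show ?thesis using vs by simp
  qed
  finally have 1: "util d v v \<le> util d v (C t)" by simp
  have "(\<Sum>k<d. v k)^2 / d \<le> util d v v" unfolding util_def using cs[OF d] by simp
  with vs 1 show ?thesis by simp
qed

lemma util_le1:
  assumes "in_simplex d v" "in_simplex d c"
  shows "util d v c \<le> 1" "0 \<le> util d v c"
proof -
  have ck: "c k \<le> 1" if "k < d" for k
  proof -
    have "c k \<le> (\<Sum>k<d. c k)"
      by (rule member_le_sum) (use assms(2) that in \<open>auto simp: in_simplex_def\<close>)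
    thus ?thesis using assms(2) by (simp add: in_simplex_def)
  qed
  have "util d v c \<le> (\<Sum>k<d. v k * 1)" unfolding util_def
    by (rule sum_mono) (use assms(1) ck in \<open>auto simp: in_simplex_def intro: mult_left_le\<close>)
  thus "util d v c \<le> 1" using assms(1) by (simp add: in_simplex_def)
  show "0 \<le> util d v c" unfolding util_def
    by (rule sum_nonneg) (use assms in \<open>auto simp: in_simplex_def\<close>)
qed

lemma card_as_sum:
  fixes n :: nat shows "real (card {i. i < n \<and> P i}) = (\<Sum>i<n. if P i then 1 else 0)"
proof (induction n)
  case 0 then show ?case by simp
next
  case (Suc n)
  show ?case
  proof (cases "P n")
    case True
    have "{i. i < Suc n \<and> P i} = insert n {i. i < n \<and> P i}" using True by (auto simp: less_Suc_eq)
    then show ?thesis using Suc True by simp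
  next
    case False
    have "{i. i < Suc n \<and> P i} = {i. i < n \<and> P i}" using False by (auto simp: less_Suc_eq)
    then show ?thesis using Suc False by simp
  qed
qed

lemma upper:
  assumes n: "1 \<le> n" and m: "1 \<le> m" and d: "1 \<le> d"
    and valid: "valid_instance n m d V C"
    and rk: "\<forall>i<n. consistent_ranking m d C (V i) (R i)"
    and pw: "plurality_winner n m R w"
  shows "distortion_of n m d V C w \<le> real (min m n) * real d"
proof -
  have Vs: "\<And>i. i < n \<Longrightarrow> in_simplex d (V i)" and Cs: "\<And>j. j < m \<Longrightarrow> in_simplex d (C j)"
    and Vc: "\<And>i. i < n \<Longrightarrow> in_cone d m C (V i)"
    using valid unfolding valid_instance_def by auto
  have hd_prop: "hd (R i) < m \<and> (\<forall>j<m. util d (V i) (C j) \<le> util d (V i) (C (hd (R i))))"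
    if i: "i < n" for i
  proof -
    have c: "distinct (R i)" "set (R i) = {..<m}"
      "sorted_wrt (\<lambda>a b. util d (V i) (C b) \<le> util d (V i) (C a)) (R i)"
      using rk i unfolding consistent_ranking_def by auto
    have "0 \<in> set (R i)" using c(2) m by auto
    then obtain t rest where Ri: "R i = t # rest"
      by (cases "R i") auto
    show ?thesis using c Ri by auto
  qed
  define K where "K = card {i. i < n \<and> hd (R i) = w}"
  have w: "w < m" and Kmax: "\<And>j. j < m \<Longrightarrow> card {i. i < n \<and> hd (R i) = j} \<le> K"
    using pw unfolding plurality_winner_def K_def by auto
  have "real n = (\<Sum>i<n. (1::real))" by simp
  also have "\<dots> = (\<Sum>i<n. \<Sum>j<m. if hd (R i) = j then 1 else 0)"
    by (rule sum.cong) (use hd_prop in auto)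
  also have "\<dots> = (\<Sum>j<m. \<Sum>i<n. if hd (R i) = j then 1 else 0)"
    by (rule sum.swap)
  also have "\<dots> = (\<Sum>j<m. real (card {i. i < n \<and> hd (R i) = j}))"
    by (simp add: card_as_sum)
  also have "\<dots> \<le> (\<Sum>j<m. real K)"
    by (rule sum_mono) (simp add: Kmax)
  finally have nK: "real n \<le> real m * real K" by simp
  have K1: "1 \<le> real K"
  proof (rule ccontr)
    assume "\<not> 1 \<le> real K" hence "K = 0" by simp
    with nK n show False by simp
  qed
  have dpos: "real d > 0" using d by simp
  have "real K / real d = (\<Sum>i\<in>{i. i < n \<and> hd (R i) = w}. 1 / real d)"
    by (simp add: K_def)
  also have "\<dots> \<le> (\<Sum>i\<in>{i. i < n \<and> hd (R i) = w}. util d (V i) (C w))"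
  proof (rule sum_mono)
    fix i assume "i \<in> {i. i < n \<and> hd (R i) = w}"
    hence i: "i < n" and hw: "hd (R i) = w" by auto
    show "1 / real d \<le> util d (V i) (C w)"
      using util_top[of d "V i" m C w] d Vs[OF i] Cs Vc[OF i] w hd_prop[OF i] hw by auto
  qed
  also have "\<dots> \<le> (\<Sum>i<n. util d (V i) (C w))"
    by (rule sum_mono2) (auto intro: util_le1(2) Vs Cs w)
  finally have UWw: "real K / real d \<le> UW n d V (C w)" unfolding UW_def .
  have Mle: "(MAX j\<in>{..<m}. UW n d V (C j)) \<le> real n"
  proof -
    have "UW n d V (C j) \<le> real n" if "j < m" for j
    proof -
      have "UW n d V (C j) \<le> (\<Sum>i<n. (1::real))" unfolding UW_def
        by (rule sum_mono) (auto intro: util_le1(1) Vs Cs that)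
      thus ?thesis by simp
    qed
    moreover have "0 \<in> {..<m}" using m by simp
    ultimately show ?thesis by (subst Max_le_iff) auto
  qed
  have Upos: "0 < UW n d V (C w)"
    using UWw K1 dpos by (smt (verit) divide_pos_pos)
  have "distortion_of n m d V C w \<le> real n / UW n d V (C w)"
    unfolding distortion_of_def using Mle Upos by (simp add: divide_right_mono)
  also have "\<dots> \<le> real n / (real K / real d)"
  proof -
    have Kd: "0 < real K / real d" using K1 dpos by simp
    show ?thesis by (rule divide_left_mono[OF UWw]) (simp, rule mult_pos_pos[OF Upos Kd])
  qed
  also have "\<dots> = real n / real K * real d" by simp
  also have "\<dots> \<le> real (min m n) * real d"
  proof (rule mult_right_mono)
    have "real n / real K \<le> real m" using nK K1 by (simp add: divide_le_eq mult.commute)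
    moreover have "real n / real K \<le> real n" using K1 by (simp add: divide_le_eq mult_le_cancel_left1)
    ultimately show "real n / real K \<le> real (min m n)" by (simp add: min_def)
  qed simp
  finally show ?thesis .
qed



lemma arith1:
  fixes N M D :: real
  assumes "2 \<le> N" "2 \<le> D" "M \<ge> 2" "N \<le> M"
  shows "M' = min M N \<Longrightarrow> 1/16 * M' * D \<le> (N - 1) * (D - 1) / 1"
proof -
  assume "M' = min M N" hence "M' = N" using assms by simp
  have "N/2 * (D/2) \<le> (N-1)*(D-1)" by (rule mult_mono) (use assms in auto)
  moreover have "0 \<le> (N-1)*(D-1)" using assms by simp
  ultimately have "N*D \<le> (N-1)*(D-1)*16" by linarith
  thus ?thesis using \<open>M' = N\<close> by simp
qed

lemma arith2:
  fixes N M D G :: real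
  assumes "2 \<le> N" "2 \<le> D" "M \<ge> 2" "M < N" "1 \<le> G" "G * M \<le> N + M - 1"
  shows "1/16 * min M N * D \<le> (N - G) * (D - 1) / G"
proof -
  have mn: "min M N = M" using assms by simp
  have a: "(N - G) * M \<ge> (N - 1) * (M - 1)" using assms by (simp add: algebra_simps)
  have b: "(N - 1) * (M - 1) \<ge> (N/2) * (M/2)" by (rule mult_mono) (use assms in auto)
  have c0: "(N/4) * M \<le> (N - G) * M" using a b by simp
  have c: "N - G \<ge> N / 4" using c0 assms by (simp add: mult_le_cancel_right)
  have e: "G * M \<le> 2 * N" using assms by simp
  have f: "N / 4 * (D - 1) \<le> (N - G) * (D - 1)" using c assms by (intro mult_right_mono) auto
  have g0: "N * (D - 2) \<ge> 0" using assms by simp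
  have g: "N * (D - 1) \<ge> N * D / 2" using g0 by (simp add: right_diff_distrib mult.commute)
  have h: "M * D * G \<le> 2 * N * D" proof -
    have "G * M * D \<le> 2 * N * D" using e assms by (intro mult_right_mono) auto
    thus ?thesis by (simp add: algebra_simps)
  qed
  have "M * D * G \<le> 16 * ((N - G) * (D - 1))" using f g h by linarith
  hence "1/16 * M * D * G \<le> (N - G) * (D - 1)" by simp
  thus ?thesis using mn assms by (simp add: field_simps)
qed



lemma sum_ge1:
  fixes c :: real shows "(\<Sum>k<d. if 1 \<le> k then c else 0) = real (d - 1) * c"
proof (induction d)
  case 0 then show ?case by simp
next
  case (Suc d) then show ?case by (cases d) (auto simp: algebra_simps)
qed

definition e0 :: "nat \<Rightarrow> real" where "e0 = (\<lambda>k. if k = 0 then 1 else 0)"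
definition wv :: "nat \<Rightarrow> nat \<Rightarrow> real" where
  "wv d = (\<lambda>k. if 1 \<le> k \<and> k < d then 1 / (real d - 1) else 0)"
definition CC :: "nat \<Rightarrow> nat \<Rightarrow> nat \<Rightarrow> real" where
  "CC d j = (if j = 0 then wv d else e0)"

lemma simplex_CC: assumes "2 \<le> d" shows "in_simplex d (CC d j)"
proof (cases "j = 0")
  case True
  have "(\<Sum>k<d. wv d k) = (\<Sum>k<d. if 1 \<le> k then 1 / (real d - 1) else 0)"
    by (rule sum.cong) (auto simp: wv_def)
  also have "\<dots> = 1" using assms by (subst sum_ge1) (simp add: of_nat_diff field_simps)
  finally show ?thesis using True by (auto simp: in_simplex_def CC_def wv_def)
next
  case False
  have "(\<Sum>k<d. e0 k) = 1" using assms by (simp add: e0_def)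
  thus ?thesis using False assms by (auto simp: in_simplex_def CC_def e0_def)
qed

lemma util_CC: assumes "2 \<le> d"
  shows "util d (CC d a) (CC d b) = (if a = 0 then (if b = 0 then 1 / (real d - 1) else 0)
      else (if b = 0 then 0 else 1))"
proof -
  have ww: "(\<Sum>k<d. wv d k * wv d k) = 1 / (real d - 1)"
  proof -
    have "(\<Sum>k<d. wv d k * wv d k) = (\<Sum>k<d. if 1 \<le> k then 1 / (real d - 1) / (real d - 1) else 0)"
      by (rule sum.cong) (auto simp: wv_def)
    also have "\<dots> = 1 / (real d - 1)"
    proof -
      have nz: "real d - 1 \<noteq> 0" using assms by simp
      show ?thesis using assms by (subst sum_ge1) (simp add: of_nat_diff nz)
    qed
    finally show ?thesis .
  qed
  have we: "(\<Sum>k<d. wv d k * e0 k) = 0" by (rule sum.neutral) (auto simp: wv_def e0_def)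
  have ew: "(\<Sum>k<d. e0 k * wv d k) = 0" by (rule sum.neutral) (auto simp: wv_def e0_def)
  have ee: "(\<Sum>k<d. e0 k * e0 k) = 1"
  proof -
    have "(\<Sum>k<d. e0 k * e0 k) = (\<Sum>k<d. e0 k)" by (rule sum.cong) (auto simp: e0_def)
    thus ?thesis using assms by (simp add: e0_def)
  qed
  show ?thesis using ww we ew ee by (auto simp: util_def CC_def)
qed

lemma cone_CC: assumes "j0 < m" shows "in_cone d m (CC d) (CC d j0)"
  unfolding in_cone_def
  apply (rule exI[of _ "\<lambda>j. if j = j0 then 1 else (0::real)"])
proof (intro conjI allI impI)
  fix k
  have "(\<Sum>j<m. (if j = j0 then 1 else 0) * CC d j k) = (\<Sum>j<m. if j = j0 then CC d j k else 0)"
    by (rule sum.cong) auto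
  also have "\<dots> = CC d j0 k" using assms by (simp add: sum.delta)
  finally show "CC d j0 k = (\<Sum>j<m. (if j = j0 then 1 else 0) * CC d j k)" by simp
qed auto

lemma lower:
  assumes n: "2 \<le> n" and m: "2 \<le> m" and d: "2 \<le> d"
  shows "ereal (1/16 * real (min m n) * real d) \<le> D_plur n m d"
proof -
  define g where "g = (n + m - 1) div m"
  have mpos: "0 < m" using m by simp
  have gmn: "g * m \<le> n + m - 1" unfolding g_def by simp
  have ngm: "n \<le> g * m"
    using dividend_less_div_times[OF mpos, of "n + m - 1"] m unfolding g_def by simp
  have g1: "1 \<le> g"
  proof -
    have "m div m \<le> (n + m - 1) div m" by (rule div_le_mono) (use n in simp)
    thus ?thesis using mpos unfolding g_def by simp
  qed
  have gn: "g \<le> n"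
  proof (rule ccontr)
    assume "\<not> g \<le> n" hence "n + 1 \<le> g" by simp
    hence "(n + 1) * m \<le> g * m" by (rule mult_right_mono) simp
    moreover have "n \<le> m * n" using m by simp
    moreover have "(n + 1) * m = m * n + m" by simp
    ultimately show False using gmn n m by linarith
  qed
  have gpos: "0 < g" using g1 by simp
  define C where "C = CC d"
  define V where "V = (\<lambda>i. C (if i < g then 0 else 1))"
  have top_lt: "i div g < m" if "i < n" for i
    using less_mult_imp_div_less[of i m g] that ngm by (metis less_le_trans mult.commute)
  have divz: "i div g = 0 \<longleftrightarrow> i < g" for i using gpos by (simp add: div_eq_0_iff)
  have top_max: "util d (V i) (C x) \<le> util d (V i) (C (i div g))" if "x < m" for i x
    using divz[of i] d unfolding V_def C_def by (auto simp: util_CC)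
  have Rex: "\<exists>r. consistent_ranking m d C (V i) r \<and> hd r = i div g" if "i < n" for i
    using exists_ranking[OF top_lt[OF that], of "\<lambda>x. util d (V i) (C x)"] top_max
    unfolding consistent_ranking_def by blast
  define R where "R i = (SOME r. consistent_ranking m d C (V i) r \<and> hd r = i div g)" for i
  have Rprop: "consistent_ranking m d C (V i) (R i) \<and> hd (R i) = i div g" if "i < n" for i
    unfolding R_def by (rule someI_ex[OF Rex[OF that]])
  have valid: "valid_instance n m d V C"
    unfolding valid_instance_def
  proof (intro conjI allI impI)
    fix i show "in_simplex d (V i)" unfolding V_def C_def using simplex_CC[OF d] by simp
    show "in_cone d m C (V i)" unfolding V_def C_def using cone_CC[of _ m d] m by simp
  next
    fix j show "in_simplex d (C j)" unfolding C_def using simplex_CC[OF d] by simp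
  qed
  have cardeq: "{i. i < n \<and> hd (R i) = j} = {i. i < n \<and> i div g = j}" for j
    using Rprop by auto
  have pw: "plurality_winner n m R 0"
    unfolding plurality_winner_def
  proof (intro conjI allI impI)
    show "0 < m" by (rule mpos)
    fix j assume "j < m"
    have c0: "{i. i < n \<and> i div g = 0} = {..<g}"
    proof (rule set_eqI)
      fix i
      have "i < n \<and> i div g = 0 \<longleftrightarrow> i < g" using divz[of i] gn by linarith
      thus "i \<in> {i. i < n \<and> i div g = 0} \<longleftrightarrow> i \<in> {..<g}" by simp
    qed
    have sub: "{i. i < n \<and> i div g = j} \<subseteq> {j * g..<j * g + g}"
    proof
      fix i assume "i \<in> {i. i < n \<and> i div g = j}"
      hence ij: "i div g = j" by simp
      have e: "j * g + i mod g = i" using ij div_mult_mod_eq[of i g] by simp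
      have r: "i mod g < g" using gpos by simp
      have "j * g \<le> i \<and> i < j * g + g"
      proof
        show "j * g \<le> i" using e by (metis le_add1)
        show "i < j * g + g" using e r by (metis nat_add_left_cancel_less)
      qed
      thus "i \<in> {j * g..<j * g + g}" by (simp only: atLeastLessThan_iff)
    qed
    have "card {i. i < n \<and> i div g = j} \<le> card {j * g..<j * g + g}"
      by (rule card_mono[OF _ sub]) simp
    thus "card {i. i < n \<and> hd (R i) = j} \<le> card {i. i < n \<and> hd (R i) = 0}"
      unfolding cardeq c0 by simp
  qed
  have rk: "\<forall>i<n. consistent_ranking m d C (V i) (R i)" using Rprop by blast
  have Cu: "util d (V i) (C b) = (if i < g then (if b = 0 then 1 / (real d - 1) else 0)
      else (if b = 0 then 0 else 1))" for i b
    unfolding V_def C_def using util_CC[OF d] by simp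
  have cg: "real (card {i. i < n \<and> i < g}) = real g"
  proof -
    have "{i. i < n \<and> i < g} = {..<g}" using gn by auto
    thus ?thesis by simp
  qed
  have UW0: "UW n d V (C 0) = real g / (real d - 1)"
  proof -
    have "UW n d V (C 0) = (\<Sum>i<n. (1 / (real d - 1)) * (if i < g then 1 else 0))"
      unfolding UW_def by (rule sum.cong) (auto simp: Cu)
    also have "\<dots> = (1 / (real d - 1)) * real (card {i. i < n \<and> i < g})"
      by (simp add: sum_divide_distrib card_as_sum)
    finally show ?thesis using cg by simp
  qed
  have UW1: "UW n d V (C 1) = real n - real g"
  proof -
    have "UW n d V (C 1) = (\<Sum>i<n. 1 - (if i < g then 1 else 0))"
      unfolding UW_def by (rule sum.cong) (auto simp: Cu)
    also have "\<dots> = real n - real (card {i. i < n \<and> i < g})"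
      by (simp add: sum_subtractf card_as_sum)
    finally show ?thesis using cg by simp
  qed
  have dm1: "real d - 1 > 0" using d by simp
  have U0pos: "UW n d V (C 0) > 0" using UW0 dm1 g1 by simp
  have Mge: "real n - real g \<le> (MAX j\<in>{..<m}. UW n d V (C j))"
    unfolding UW1[symmetric] by (rule Max_ge) (use m in auto)
  have "(real n - real g) * (real d - 1) / real g = (real n - real g) / UW n d V (C 0)"
    using UW0 dm1 by simp
  also have "\<dots> \<le> distortion_of n m d V C 0"
    unfolding distortion_of_def by (rule divide_right_mono[OF Mge]) (use U0pos in simp)
  finally have dist: "(real n - real g) * (real d - 1) / real g \<le> distortion_of n m d V C 0" .
  have ar: "1/16 * real (min m n) * real d \<le> (real n - real g) * (real d - 1) / real g"
  proof (cases "n \<le> m")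
    case True
    have "g * m < 2 * m" using gmn True m by linarith
    hence "g < 2" by simp
    hence g1': "g = 1" using g1 by simp
    have A: "1/16 * real (min m n) * real d \<le> (real n - 1) * (real d - 1) / 1"
      by (rule arith1[of "real n" "real d" "real m"]) (use n m d True in auto)
    then show ?thesis unfolding g1' by simp
  next
    case False
    have gm: "real g * real m \<le> real n + real m - 1"
    proof -
      have gm0: "g * m + 1 \<le> n + m" using gmn m by linarith
      have "real (g * m + 1) \<le> real (n + m)" using gm0 by (simp only: of_nat_le_iff)
      thus ?thesis by simp
    qed
    have "1/16 * min (real m) (real n) * real d \<le> (real n - real g) * (real d - 1) / real g"
      by (rule arith2) (use n m d False g1 gm in auto)
    thus ?thesis by (simp only: of_nat_min)
  qed
  have mem: "(V, C, R, 0) \<in> {(V, C, R, w). valid_instance n m d V C \<and>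
        (\<forall>i<n. consistent_ranking m d C (V i) (R i)) \<and> plurality_winner n m R w}"
    using valid rk pw by simp
  have "ereal (distortion_of n m d V C 0) \<le> D_plur n m d"
    unfolding D_plur_def by (rule SUP_upper2[OF mem]) simp
  moreover have "ereal (1/16 * real (min m n) * real d) \<le> ereal (distortion_of n m d V C 0)"
    using order_trans[OF ar dist] by (simp only: ereal_less_eq(3))
  ultimately show ?thesis by (rule order_trans[rotated])
qed

theorem theorem1:
  shows "\<exists>c1 c2 :: real. 0 < c1 \<and> 0 < c2 \<and>
    (\<forall>n m d. 1 \<le> n \<and> 1 \<le> m \<and> 1 \<le> d \<longrightarrow>
        D_plur n m d \<le> ereal (c2 * real (min m n) * real d)) \<and>
    (\<forall>n m d. 2 \<le> n \<and> 2 \<le> m \<and> 2 \<le> d \<longrightarrow>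
        ereal (c1 * real (min m n) * real d) \<le> D_plur n m d)"
proof -
  have U: "\<forall>n m d. 1 \<le> n \<and> 1 \<le> m \<and> 1 \<le> d \<longrightarrow>
        D_plur n m d \<le> ereal (1 * real (min m n) * real d)"
  proof (intro allI impI)
    fix n m d :: nat assume "1 \<le> n \<and> 1 \<le> m \<and> 1 \<le> d"
    then show "D_plur n m d \<le> ereal (1 * real (min m n) * real d)"
      unfolding D_plur_def using upper by (auto intro!: SUP_least)
  qed
  have L: "\<forall>n m d. 2 \<le> n \<and> 2 \<le> m \<and> 2 \<le> d \<longrightarrow>
        ereal (1/16 * real (min m n) * real d) \<le> D_plur n m d"
    using lower by auto
  show ?thesis
    apply (rule exI[of _ "1/16::real"], rule exI[of _ "1::real"])
    using U L by simp
qed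

end
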